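(* Let $x_i,y_i\in\mathbb{Z}$ ($1\le i\le N$) with $x_i\le x_{i+1}$ and $y_i\le y_{i+1}$ for all $i$. For $\sigma\in\mathbb{S}_N$ define the Laurent monomial $$h_\sigma(\xi_1,\dots,\xi_N)=\prod_{(b,a)}\frac{\xi_a}{\xi_b}\prod_{i=1}^N\xi_{\sigma(i)}^{\,x_i-y_{\sigma(i)}-1},$$ the first product over all inversions $(b,a)$ of $\sigma$, and for $\gamma\in\{1,\dots,N\}$ let $h^\gamma_\sigma$ be the function of $\eta$ and $\xi_\delta$ ($\delta\ne\gamma$) obtained by substituting $\xi_\gamma=\eta/\prod_{\delta\ne\gamma}\xi_\delta$ into $h_\sigma$. (i) If $\sigma,\sigma'\in\mathbb{S}_N$ differ only by an interchange of two adjacent entries $\alpha$ and $\beta$, and $\gamma\ne\alpha,\beta$, then $h^\gamma_\sigma|_{\xi_\alpha=\xi_\beta}=h^\gamma_{\sigma'}|_{\xi_\alpha=\xi_\beta}$. (ii) If moreover $\gamma$ appears to the left of $\alpha$ and $\beta$ and $\gamma>\alpha,\beta$, then the exponents of $\xi_\alpha$ and of $\xi_\beta$ in $h^\gamma_\sigma$ and in $h^\gamma_{\sigma'}$ are greater than or equal to $2$.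
   Context: Permutations are in one-line notation $\sigma(1)\cdots\sigma(N)$; an inversion $(b,a)$ of $\sigma$ is a pair of entries with $b>a$ and $b$ appearing to the left of $a$ in $\sigma$. *)

theory Defs
  imports Complex_Main "HOL-Combinatorics.Permutations"
begin

text \<open>Permutations of {1..N} in one-line notation: sigma i is the entry at position i.
  Inversions (b,a): b > a and b appears to the left of a.\<close>
definition inversions :: "nat \<Rightarrow> (nat \<Rightarrow> nat) \<Rightarrow> (nat \<times> nat) set" where
  "inversions N \<sigma> = {(\<sigma> i, \<sigma> j) | i j. 1 \<le> i \<and> i < j \<and> j \<le> N \<and> \<sigma> i > \<sigma> j}"

definition h_mon :: "nat \<Rightarrow> (nat \<Rightarrow> int) \<Rightarrow> (nat \<Rightarrow> int) \<Rightarrow> (nat \<Rightarrow> nat) \<Rightarrow> (nat \<Rightarrow> real) \<Rightarrow> real" where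
  "h_mon N x y \<sigma> \<xi> =
     (\<Prod>(b, a)\<in>inversions N \<sigma>. \<xi> a / \<xi> b) *
     (\<Prod>i\<in>{1..N}. \<xi> (\<sigma> i) powi (x i - y (\<sigma> i) - 1))"

text \<open>h^gamma_sigma: substitute xi_gamma = eta / prod_{delta ~= gamma} xi_delta;
  a function of eta and of xi_delta (delta ~= gamma); the value xi gamma is ignored.\<close>
definition h_sub :: "nat \<Rightarrow> (nat \<Rightarrow> int) \<Rightarrow> (nat \<Rightarrow> int) \<Rightarrow> (nat \<Rightarrow> nat) \<Rightarrow> nat \<Rightarrow> real \<Rightarrow> (nat \<Rightarrow> real) \<Rightarrow> real" where
  "h_sub N x y \<sigma> \<gamma> \<eta> \<xi> =
     h_mon N x y \<sigma> (\<xi>(\<gamma> := \<eta> / (\<Prod>\<delta>\<in>{1..N} - {\<gamma>}. \<xi> \<delta>)))"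

text \<open>The exponent of xi_delta in F is then e delta (unique).\<close>
definition laurent_monomial_exps ::
    "nat set \<Rightarrow> (real \<Rightarrow> (nat \<Rightarrow> real) \<Rightarrow> real) \<Rightarrow> int \<Rightarrow> (nat \<Rightarrow> int) \<Rightarrow> bool" where
  "laurent_monomial_exps V F c e \<longleftrightarrow>
     (\<forall>\<eta> \<xi>. \<eta> \<noteq> 0 \<longrightarrow> (\<forall>\<delta>\<in>V. \<xi> \<delta> \<noteq> 0) \<longrightarrow>
        F \<eta> \<xi> = \<eta> powi c * (\<Prod>\<delta>\<in>V. \<xi> \<delta> powi e \<delta>))"

end

theory Submission
  imports Defs
begin

lemma prod_powi: "finite A \<Longrightarrow> (\<Prod>i\<in>A. (f i :: real)) powi m = (\<Prod>i\<in>A. f i powi m)"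
  by (induction A rule: finite_induct) (auto simp: power_int_mult_distrib)

lemma prod_cond_const: "finite A \<Longrightarrow> (\<Prod>i\<in>A. if P i then (c::real) else 1) = c ^ card {i\<in>A. P i}"
  by (simp flip: prod.inter_filter)

lemma aux: "(L::nat) + M = j - 1 \<Longrightarrow> M + R = s - 1 \<Longrightarrow> 1 \<le> j \<Longrightarrow> 1 \<le> s \<Longrightarrow> int L - int R = int j - int s"
  by arith

lemma count_lemma:
  assumes perm: "\<sigma> permutes {1..N}" and j: "j \<in> {1..N}"
  shows "int (card {i\<in>{1..N}. i < j \<and> \<sigma> j < \<sigma> i}) - int (card {i\<in>{1..N}. j < i \<and> \<sigma> i < \<sigma> j})
         = int j - int (\<sigma> j)"
proof -
  let ?S = "{1..N::nat}"
  have inj: "inj \<sigma>" using perm permutes_inj by blast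
  have im: "\<sigma> ` ?S = ?S" using perm permutes_image by blast
  have A: "{i\<in>?S. i < j} = {i\<in>?S. i < j \<and> \<sigma> j < \<sigma> i} \<union> {i\<in>?S. i < j \<and> \<sigma> i < \<sigma> j}"
  proof (intro set_eqI iffI)
    fix i assume i: "i \<in> {i\<in>?S. i < j}"
    have "\<sigma> i \<noteq> \<sigma> j" using i inj by (auto dest: injD)
    then show "i \<in> {i\<in>?S. i < j \<and> \<sigma> j < \<sigma> i} \<union> {i\<in>?S. i < j \<and> \<sigma> i < \<sigma> j}"
      using i by (auto simp: nat_neq_iff)
  qed auto
  have A1: "card {i\<in>?S. i < j} = card {i\<in>?S. i < j \<and> \<sigma> j < \<sigma> i} + card {i\<in>?S. i < j \<and> \<sigma> i < \<sigma> j}"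
    unfolding A by (rule card_Un_disjoint) auto
  have A2: "{i\<in>?S. i < j} = {1..<j}" using j by auto
  have B: "{i\<in>?S. \<sigma> i < \<sigma> j} = {i\<in>?S. i < j \<and> \<sigma> i < \<sigma> j} \<union> {i\<in>?S. j < i \<and> \<sigma> i < \<sigma> j}"
  proof (intro set_eqI iffI)
    fix i assume "i \<in> {i\<in>?S. \<sigma> i < \<sigma> j}"
    moreover have "i \<noteq> j" using calculation by auto
    ultimately show "i \<in> {i\<in>?S. i < j \<and> \<sigma> i < \<sigma> j} \<union> {i\<in>?S. j < i \<and> \<sigma> i < \<sigma> j}"
      by (auto simp: nat_neq_iff)
  qed auto
  have B1: "card {i\<in>?S. \<sigma> i < \<sigma> j} = card {i\<in>?S. i < j \<and> \<sigma> i < \<sigma> j} + card {i\<in>?S. j < i \<and> \<sigma> i < \<sigma> j}"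
    unfolding B by (rule card_Un_disjoint) auto
  have B2: "\<sigma> ` {i\<in>?S. \<sigma> i < \<sigma> j} = {v\<in>?S. v < \<sigma> j}"
  proof
    show "\<sigma> ` {i\<in>?S. \<sigma> i < \<sigma> j} \<subseteq> {v\<in>?S. v < \<sigma> j}" using im by auto
    show "{v\<in>?S. v < \<sigma> j} \<subseteq> \<sigma> ` {i\<in>?S. \<sigma> i < \<sigma> j}"
    proof
      fix v assume v: "v \<in> {v\<in>?S. v < \<sigma> j}"
      then have "v \<in> \<sigma> ` ?S" using im by simp
      then obtain i where "i \<in> ?S" "v = \<sigma> i" by blast
      then show "v \<in> \<sigma> ` {i\<in>?S. \<sigma> i < \<sigma> j}" using v by auto
    qed
  qed
  have sj: "\<sigma> j \<in> ?S" using im j by blast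
  have B3: "{v\<in>?S. v < \<sigma> j} = {1..<\<sigma> j}" using sj by auto
  have B4: "card {i\<in>?S. \<sigma> i < \<sigma> j} = \<sigma> j - 1"
  proof -
    have "card (\<sigma> ` {i\<in>?S. \<sigma> i < \<sigma> j}) = card {i\<in>?S. \<sigma> i < \<sigma> j}"
      by (rule card_image) (rule inj_on_subset[OF inj subset_UNIV])
    then show ?thesis using B2 B3 by simp
  qed
  have e1: "card {i\<in>?S. i < j \<and> \<sigma> j < \<sigma> i} + card {i\<in>?S. i < j \<and> \<sigma> i < \<sigma> j} = j - 1"
    using A1 A2 by simp
  have e2: "card {i\<in>?S. i < j \<and> \<sigma> i < \<sigma> j} + card {i\<in>?S. j < i \<and> \<sigma> i < \<sigma> j} = \<sigma> j - 1"
    using B1 B4 by simp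
  show ?thesis by (rule aux[OF e1 e2]) (use j sj in auto)
qed

lemma inv_prod:
  assumes perm: "\<sigma> permutes {1..N}" and nz: "\<forall>\<delta>\<in>{1..N}. \<xi> \<delta> \<noteq> (0::real)"
  shows "(\<Prod>(b, a)\<in>inversions N \<sigma>. \<xi> a / \<xi> b)
     = (\<Prod>j\<in>{1..N}. \<xi> (\<sigma> j) powi (int (card {i\<in>{1..N}. i < j \<and> \<sigma> j < \<sigma> i}) - int (card {i\<in>{1..N}. j < i \<and> \<sigma> i < \<sigma> j})))"
proof -
  let ?S = "{1..N::nat}"
  define P where "P = {p\<in>?S \<times> ?S. fst p < snd p \<and> \<sigma> (snd p) < \<sigma> (fst p)}"
  have inj: "inj \<sigma>" using perm permutes_inj by blast
  have im: "\<sigma> ` ?S = ?S" using perm permutes_image by blast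
  have sS: "\<And>i. i \<in> ?S \<Longrightarrow> \<sigma> i \<in> ?S" using im by blast
  have nz': "\<And>i. i \<in> ?S \<Longrightarrow> \<xi> (\<sigma> i) \<noteq> 0" using nz sS by blast
  have invs: "inversions N \<sigma> = (\<lambda>p. (\<sigma> (fst p), \<sigma> (snd p))) ` P"
  proof (intro set_eqI iffI)
    fix q assume "q \<in> inversions N \<sigma>"
    then obtain i j where ij: "q = (\<sigma> i, \<sigma> j)" "1 \<le> i" "i < j" "j \<le> N" "\<sigma> i > \<sigma> j"
      unfolding inversions_def by blast
    then show "q \<in> (\<lambda>p. (\<sigma> (fst p), \<sigma> (snd p))) ` P"
      by (intro image_eqI[of _ _ "(i,j)"]) (auto simp: P_def)
  next
    fix q assume "q \<in> (\<lambda>p. (\<sigma> (fst p), \<sigma> (snd p))) ` P"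
    then obtain i j where ij: "(i, j) \<in> P" "q = (\<sigma> i, \<sigma> j)" by auto
    then have "1 \<le> i \<and> i < j \<and> j \<le> N \<and> \<sigma> i > \<sigma> j" by (auto simp: P_def)
    then show "q \<in> inversions N \<sigma>" unfolding inversions_def using ij(2) by blast
  qed
  have injP: "inj_on (\<lambda>p. (\<sigma> (fst p), \<sigma> (snd p))) P"
    using inj by (auto simp: inj_on_def dest: injD intro: prod_eqI)
  have "(\<Prod>(b, a)\<in>inversions N \<sigma>. \<xi> a / \<xi> b) = (\<Prod>p\<in>P. \<xi> (\<sigma> (snd p)) / \<xi> (\<sigma> (fst p)))"
    unfolding invs by (subst prod.reindex[OF injP]) simp
  also have "\<dots> = (\<Prod>p\<in>?S \<times> ?S. if fst p < snd p \<and> \<sigma> (snd p) < \<sigma> (fst p) then \<xi> (\<sigma> (snd p)) / \<xi> (\<sigma> (fst p)) else 1)"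
    unfolding P_def by (rule prod.inter_filter) simp
  also have "\<dots> = (\<Prod>p\<in>?S \<times> ?S. (if fst p < snd p \<and> \<sigma> (snd p) < \<sigma> (fst p) then \<xi> (\<sigma> (snd p)) else 1)
        * (if fst p < snd p \<and> \<sigma> (snd p) < \<sigma> (fst p) then inverse (\<xi> (\<sigma> (fst p))) else 1))"
    by (rule prod.cong) (auto simp: field_simps)
  also have "\<dots> = (\<Prod>p\<in>?S \<times> ?S. (if fst p < snd p \<and> \<sigma> (snd p) < \<sigma> (fst p) then \<xi> (\<sigma> (snd p)) else 1))
        * (\<Prod>p\<in>?S \<times> ?S. (if fst p < snd p \<and> \<sigma> (snd p) < \<sigma> (fst p) then inverse (\<xi> (\<sigma> (fst p))) else 1))"
    by (rule prod.distrib)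
  also have "(\<Prod>p\<in>?S \<times> ?S. (if fst p < snd p \<and> \<sigma> (snd p) < \<sigma> (fst p) then \<xi> (\<sigma> (snd p)) else 1))
     = (\<Prod>j\<in>?S. \<xi> (\<sigma> j) ^ card {i\<in>?S. i < j \<and> \<sigma> j < \<sigma> i})"
  proof -
    have "(\<Prod>p\<in>?S \<times> ?S. (if fst p < snd p \<and> \<sigma> (snd p) < \<sigma> (fst p) then \<xi> (\<sigma> (snd p)) else 1))
      = (\<Prod>i\<in>?S. \<Prod>j\<in>?S. (if i < j \<and> \<sigma> j < \<sigma> i then \<xi> (\<sigma> j) else 1))"
      by (simp add: prod.cartesian_product case_prod_beta')
    also have "\<dots> = (\<Prod>j\<in>?S. \<Prod>i\<in>?S. (if i < j \<and> \<sigma> j < \<sigma> i then \<xi> (\<sigma> j) else 1))"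
      by (rule prod.swap)
    also have "\<dots> = (\<Prod>j\<in>?S. \<xi> (\<sigma> j) ^ card {i\<in>?S. i < j \<and> \<sigma> j < \<sigma> i})"
      by (rule prod.cong[OF refl], rule prod_cond_const) simp
    finally show ?thesis .
  qed
  also have "(\<Prod>p\<in>?S \<times> ?S. (if fst p < snd p \<and> \<sigma> (snd p) < \<sigma> (fst p) then inverse (\<xi> (\<sigma> (fst p))) else 1))
     = (\<Prod>i\<in>?S. inverse (\<xi> (\<sigma> i)) ^ card {j\<in>?S. i < j \<and> \<sigma> j < \<sigma> i})"
  proof -
    have "(\<Prod>p\<in>?S \<times> ?S. (if fst p < snd p \<and> \<sigma> (snd p) < \<sigma> (fst p) then inverse (\<xi> (\<sigma> (fst p))) else 1))
      = (\<Prod>i\<in>?S. \<Prod>j\<in>?S. (if i < j \<and> \<sigma> j < \<sigma> i then inverse (\<xi> (\<sigma> i)) else 1))"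
      by (simp add: prod.cartesian_product case_prod_beta')
    also have "\<dots> = (\<Prod>i\<in>?S. inverse (\<xi> (\<sigma> i)) ^ card {j\<in>?S. i < j \<and> \<sigma> j < \<sigma> i})"
      by (rule prod.cong[OF refl], rule prod_cond_const) simp
    finally show ?thesis .
  qed
  also have "(\<Prod>j\<in>?S. \<xi> (\<sigma> j) ^ card {i\<in>?S. i < j \<and> \<sigma> j < \<sigma> i}) * (\<Prod>i\<in>?S. inverse (\<xi> (\<sigma> i)) ^ card {j\<in>?S. i < j \<and> \<sigma> j < \<sigma> i})
    = (\<Prod>j\<in>?S. \<xi> (\<sigma> j) ^ card {i\<in>?S. i < j \<and> \<sigma> j < \<sigma> i} * inverse (\<xi> (\<sigma> j)) ^ card {i\<in>?S. j < i \<and> \<sigma> i < \<sigma> j})"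
    by (simp add: prod.distrib)
  also have "\<dots> = (\<Prod>j\<in>?S. \<xi> (\<sigma> j) powi (int (card {i\<in>?S. i < j \<and> \<sigma> j < \<sigma> i}) - int (card {i\<in>?S. j < i \<and> \<sigma> i < \<sigma> j})))"
  proof (rule prod.cong[OF refl])
    fix j assume j: "j \<in> ?S"
    show "\<xi> (\<sigma> j) ^ card {i\<in>?S. i < j \<and> \<sigma> j < \<sigma> i} * inverse (\<xi> (\<sigma> j)) ^ card {i\<in>?S. j < i \<and> \<sigma> i < \<sigma> j}
       = \<xi> (\<sigma> j) powi (int (card {i\<in>?S. i < j \<and> \<sigma> j < \<sigma> i}) - int (card {i\<in>?S. j < i \<and> \<sigma> i < \<sigma> j}))"
      using nz'[OF j] by (simp add: power_int_diff power_inverse divide_inverse)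
  qed
  finally show ?thesis .
qed

definition Eexp :: "(nat\<Rightarrow>int) \<Rightarrow> (nat\<Rightarrow>int) \<Rightarrow> (nat\<Rightarrow>nat) \<Rightarrow> nat \<Rightarrow> int" where
  "Eexp x y \<sigma> \<delta> = x (inv \<sigma> \<delta>) - y \<delta> - 1 + int (inv \<sigma> \<delta>) - int \<delta>"

lemma h_mon_formula:
  assumes perm: "\<sigma> permutes {1..N}" and nz: "\<forall>\<delta>\<in>{1..N}. \<xi> \<delta> \<noteq> (0::real)"
  shows "h_mon N x y \<sigma> \<xi> = (\<Prod>\<delta>\<in>{1..N}. \<xi> \<delta> powi Eexp x y \<sigma> \<delta>)"
proof -
  let ?S = "{1..N::nat}"
  have im: "\<sigma> ` ?S = ?S" using perm permutes_image by blast
  have sS: "\<And>i. i \<in> ?S \<Longrightarrow> \<sigma> i \<in> ?S" using im by blast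
  have nz': "\<And>i. i \<in> ?S \<Longrightarrow> \<xi> (\<sigma> i) \<noteq> 0" using nz sS by blast
  have "h_mon N x y \<sigma> \<xi> = (\<Prod>j\<in>?S. \<xi> (\<sigma> j) powi (int (card {i\<in>?S. i < j \<and> \<sigma> j < \<sigma> i}) - int (card {i\<in>?S. j < i \<and> \<sigma> i < \<sigma> j})))
     * (\<Prod>j\<in>?S. \<xi> (\<sigma> j) powi (x j - y (\<sigma> j) - 1))"
    unfolding h_mon_def using inv_prod[OF perm nz] by simp
  also have "\<dots> = (\<Prod>j\<in>?S. \<xi> (\<sigma> j) powi (int (card {i\<in>?S. i < j \<and> \<sigma> j < \<sigma> i}) - int (card {i\<in>?S. j < i \<and> \<sigma> i < \<sigma> j}))
     * \<xi> (\<sigma> j) powi (x j - y (\<sigma> j) - 1))"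
    by (simp add: prod.distrib)
  also have "\<dots> = (\<Prod>j\<in>?S. \<xi> (\<sigma> j) powi Eexp x y \<sigma> (\<sigma> j))"
  proof (rule prod.cong[OF refl])
    fix j assume j: "j \<in> ?S"
    have ij: "inv \<sigma> (\<sigma> j) = j" using perm permutes_inverses(2) by metis
    show "\<xi> (\<sigma> j) powi (int (card {i\<in>?S. i < j \<and> \<sigma> j < \<sigma> i}) - int (card {i\<in>?S. j < i \<and> \<sigma> i < \<sigma> j}))
     * \<xi> (\<sigma> j) powi (x j - y (\<sigma> j) - 1) = \<xi> (\<sigma> j) powi Eexp x y \<sigma> (\<sigma> j)"
      unfolding count_lemma[OF perm j] Eexp_def ij
      using nz'[OF j] by (simp flip: power_int_add add: algebra_simps)
  qed
  also have "\<dots> = (\<Prod>\<delta>\<in>?S. \<xi> \<delta> powi Eexp x y \<sigma> \<delta>)"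
    by (rule prod.reindex_bij_betw[OF permutes_imp_bij[OF perm]])
  finally show ?thesis .
qed

lemma h_sub_formula:
  assumes perm: "\<sigma> permutes {1..N}" and g: "\<gamma> \<in> {1..N}"
  shows "laurent_monomial_exps ({1..N} - {\<gamma>}) (h_sub N x y \<sigma> \<gamma>) (Eexp x y \<sigma> \<gamma>) (\<lambda>\<delta>. Eexp x y \<sigma> \<delta> - Eexp x y \<sigma> \<gamma>)"
  unfolding laurent_monomial_exps_def
proof (intro allI impI)
  fix \<eta> :: real and \<xi> :: "nat \<Rightarrow> real" assume eta: "\<eta> \<noteq> 0" and nz: "\<forall>\<delta>\<in>{1..N} - {\<gamma>}. \<xi> \<delta> \<noteq> 0"
  let ?V = "{1..N} - {\<gamma>}"
  let ?E = "Eexp x y \<sigma>"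
  define Pr where "Pr = (\<Prod>\<delta>\<in>?V. \<xi> \<delta>)"
  have Pr: "Pr \<noteq> 0" unfolding Pr_def using nz by simp
  define \<xi>' where "\<xi>' = \<xi>(\<gamma> := \<eta> / Pr)"
  have nz': "\<forall>\<delta>\<in>{1..N}. \<xi>' \<delta> \<noteq> 0" using nz eta Pr by (auto simp: \<xi>'_def)
  have "h_sub N x y \<sigma> \<gamma> \<eta> \<xi> = (\<Prod>\<delta>\<in>{1..N}. \<xi>' \<delta> powi ?E \<delta>)"
    unfolding h_sub_def Pr_def[symmetric] \<xi>'_def[symmetric] by (rule h_mon_formula[OF perm nz'])
  also have "\<dots> = \<xi>' \<gamma> powi ?E \<gamma> * (\<Prod>\<delta>\<in>?V. \<xi>' \<delta> powi ?E \<delta>)"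
    using g by (simp add: prod.remove)
  also have "(\<Prod>\<delta>\<in>?V. \<xi>' \<delta> powi ?E \<delta>) = (\<Prod>\<delta>\<in>?V. \<xi> \<delta> powi ?E \<delta>)"
    by (rule prod.cong) (auto simp: \<xi>'_def)
  also have "\<xi>' \<gamma> powi ?E \<gamma> = \<eta> powi ?E \<gamma> / (\<Prod>\<delta>\<in>?V. \<xi> \<delta> powi ?E \<gamma>)"
    by (simp add: \<xi>'_def power_int_divide_distrib Pr_def prod_powi)
  also have "\<eta> powi ?E \<gamma> / (\<Prod>\<delta>\<in>?V. \<xi> \<delta> powi ?E \<gamma>) * (\<Prod>\<delta>\<in>?V. \<xi> \<delta> powi ?E \<delta>)
     = \<eta> powi ?E \<gamma> * ((\<Prod>\<delta>\<in>?V. \<xi> \<delta> powi ?E \<delta>) / (\<Prod>\<delta>\<in>?V. \<xi> \<delta> powi ?E \<gamma>))"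
    by simp
  also have "(\<Prod>\<delta>\<in>?V. \<xi> \<delta> powi ?E \<delta>) / (\<Prod>\<delta>\<in>?V. \<xi> \<delta> powi ?E \<gamma>) = (\<Prod>\<delta>\<in>?V. \<xi> \<delta> powi (?E \<delta> - ?E \<gamma>))"
    using nz by (simp add: prod_dividef power_int_diff)
  finally show "h_sub N x y \<sigma> \<gamma> \<eta> \<xi> = \<eta> powi ?E \<gamma> * (\<Prod>\<delta>\<in>?V. \<xi> \<delta> powi (?E \<delta> - ?E \<gamma>))" .
qed

lemma mono_chain:
  assumes "\<And>i. 1 \<le> i \<Longrightarrow> i < N \<Longrightarrow> (f::nat\<Rightarrow>int) i \<le> f (i + 1)"
  shows "1 \<le> i \<Longrightarrow> i \<le> i' \<Longrightarrow> i' \<le> N \<Longrightarrow> f i \<le> f i'"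
proof (induction i' rule: nat_induct)
  case 0 then show ?case by simp
next
  case (Suc n)
  show ?case
  proof (cases "i = Suc n")
    case True then show ?thesis by simp
  next
    case False
    then have "i \<le> n" using Suc by simp
    then have "f i \<le> f n" using Suc by simp
    also have "f n \<le> f (n + 1)" using assms[of n] Suc \<open>i \<le> n\<close> by simp
    finally show ?thesis by simp
  qed
qed

theorem lemma3p6:
  fixes N :: nat and x y :: "nat \<Rightarrow> int" and \<sigma> \<sigma>' :: "nat \<Rightarrow> nat"
    and k \<alpha> \<beta> \<gamma> :: nat
  assumes x_mono: "\<And>i. 1 \<le> i \<Longrightarrow> i < N \<Longrightarrow> x i \<le> x (i + 1)"
    and y_mono: "\<And>i. 1 \<le> i \<Longrightarrow> i < N \<Longrightarrow> y i \<le> y (i + 1)"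
    and perm: "\<sigma> permutes {1..N}"
    and k: "1 \<le> k" "k < N"
    and \<alpha>: "\<sigma> k = \<alpha>" and \<beta>: "\<sigma> (k + 1) = \<beta>"
    and \<sigma>': "\<sigma>' = \<sigma>(k := \<beta>, k + 1 := \<alpha>)"
    and \<gamma>: "\<gamma> \<in> {1..N}" "\<gamma> \<noteq> \<alpha>" "\<gamma> \<noteq> \<beta>"
  shows "(\<forall>\<eta> \<xi>. \<eta> \<noteq> 0 \<longrightarrow> (\<forall>\<delta>\<in>{1..N} - {\<gamma>}. \<xi> \<delta> \<noteq> 0) \<longrightarrow> \<xi> \<alpha> = \<xi> \<beta> \<longrightarrow>
            h_sub N x y \<sigma> \<gamma> \<eta> \<xi> = h_sub N x y \<sigma>' \<gamma> \<eta> \<xi>)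
       \<and> ((\<exists>j. 1 \<le> j \<and> j < k \<and> \<sigma> j = \<gamma>) \<and> \<gamma> > \<alpha> \<and> \<gamma> > \<beta> \<longrightarrow>
            (\<exists>c e. laurent_monomial_exps ({1..N} - {\<gamma>}) (h_sub N x y \<sigma> \<gamma>) c e
                   \<and> e \<alpha> \<ge> 2 \<and> e \<beta> \<ge> 2)
          \<and> (\<exists>c e. laurent_monomial_exps ({1..N} - {\<gamma>}) (h_sub N x y \<sigma>' \<gamma>) c e
                   \<and> e \<alpha> \<ge> 2 \<and> e \<beta> \<ge> 2))"
proof -
  let ?S = "{1..N}"
  let ?V = "{1..N} - {\<gamma>}"
  let ?E = "Eexp x y \<sigma>"
  let ?E' = "Eexp x y \<sigma>'"
  have kS: "k \<in> ?S" "k + 1 \<in> ?S" using k by auto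
  have \<sigma>'c: "\<sigma>' = \<sigma> \<circ> Transposition.transpose k (k + 1)"
  proof (rule ext)
    fix i show "\<sigma>' i = (\<sigma> \<circ> Transposition.transpose k (k + 1)) i"
      using \<alpha> \<beta> by (cases "i = k"; cases "i = k + 1") (auto simp: \<sigma>' Transposition.transpose_def)
  qed
  have perm': "\<sigma>' permutes ?S"
    unfolding \<sigma>'c by (rule permutes_compose[OF permutes_swap_id[OF kS] perm])
  have inj: "inj \<sigma>" using perm permutes_inj by blast
  have ab: "\<alpha> \<noteq> \<beta>"
  proof
    assume "\<alpha> = \<beta>"
    then have "\<sigma> k = \<sigma> (k + 1)" using \<alpha> \<beta> by simp
    then have "k = k + 1" using injD[OF inj] by blast
    then show False by simp
  qed
  have "\<sigma> k \<in> ?S" "\<sigma> (k + 1) \<in> ?S" using kS permutes_in_image[OF perm] by blast+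
  then have aS: "\<alpha> \<in> ?S" "\<beta> \<in> ?S" using \<alpha> \<beta> by auto
  have ia: "inv \<sigma> \<alpha> = k" "inv \<sigma> \<beta> = k + 1" using \<alpha> \<beta> by (simp_all add: permutes_inv_eq[OF perm])
  have ia': "inv \<sigma>' \<alpha> = k + 1" "inv \<sigma>' \<beta> = k" unfolding permutes_inv_eq[OF perm'] by (simp_all add: \<sigma>')
  have io: "inv \<sigma>' \<delta> = inv \<sigma> \<delta>" if "\<delta> \<noteq> \<alpha>" "\<delta> \<noteq> \<beta>" for \<delta>
  proof -
    have "\<sigma> (inv \<sigma> \<delta>) = \<delta>" using perm permutes_inverses(1) by metis
    then have "inv \<sigma> \<delta> \<noteq> k" "inv \<sigma> \<delta> \<noteq> k + 1" using that \<alpha> \<beta> by auto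
    then have "\<sigma>' (inv \<sigma> \<delta>) = \<delta>" using \<open>\<sigma> (inv \<sigma> \<delta>) = \<delta>\<close> by (simp add: \<sigma>')
    then show ?thesis using permutes_inv_eq[OF perm'] by blast
  qed
  have Eo: "?E' \<delta> = ?E \<delta>" if "\<delta> \<noteq> \<alpha>" "\<delta> \<noteq> \<beta>" for \<delta>
    using io[OF that] by (simp add: Eexp_def)
  have Esum: "?E' \<alpha> + ?E' \<beta> = ?E \<alpha> + ?E \<beta>"
    using ia ia' by (simp add: Eexp_def)
  have L: "laurent_monomial_exps ?V (h_sub N x y \<sigma> \<gamma>) (?E \<gamma>) (\<lambda>\<delta>. ?E \<delta> - ?E \<gamma>)"
    by (rule h_sub_formula[OF perm \<gamma>(1)])
  have L': "laurent_monomial_exps ?V (h_sub N x y \<sigma>' \<gamma>) (?E' \<gamma>) (\<lambda>\<delta>. ?E' \<delta> - ?E' \<gamma>)"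
    by (rule h_sub_formula[OF perm' \<gamma>(1)])
  have aV: "\<alpha> \<in> ?V" "\<beta> \<in> ?V" using aS \<gamma> by auto
  have split: "(\<Prod>\<delta>\<in>?V. f \<delta>) = f \<alpha> * f \<beta> * (\<Prod>\<delta>\<in>?V - {\<alpha>} - {\<beta>}. f \<delta>)" for f :: "nat \<Rightarrow> real"
  proof -
    have "(\<Prod>\<delta>\<in>?V. f \<delta>) = f \<alpha> * (\<Prod>\<delta>\<in>?V - {\<alpha>}. f \<delta>)"
      using aV by (simp add: prod.remove)
    also have "(\<Prod>\<delta>\<in>?V - {\<alpha>}. f \<delta>) = f \<beta> * (\<Prod>\<delta>\<in>?V - {\<alpha>} - {\<beta>}. f \<delta>)"
      using aV ab by (subst prod.remove[of _ \<beta>]) auto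
    finally show ?thesis by simp
  qed
  have part1: "\<forall>\<eta> \<xi>. \<eta> \<noteq> 0 \<longrightarrow> (\<forall>\<delta>\<in>{1..N} - {\<gamma>}. \<xi> \<delta> \<noteq> 0) \<longrightarrow> \<xi> \<alpha> = \<xi> \<beta> \<longrightarrow>
            h_sub N x y \<sigma> \<gamma> \<eta> \<xi> = h_sub N x y \<sigma>' \<gamma> \<eta> \<xi>"
  proof (intro allI impI)
    fix \<eta> :: real and \<xi> :: "nat \<Rightarrow> real"
    assume eta: "\<eta> \<noteq> 0" and nz: "\<forall>\<delta>\<in>{1..N} - {\<gamma>}. \<xi> \<delta> \<noteq> 0" and eq: "\<xi> \<alpha> = \<xi> \<beta>"
    have h1: "h_sub N x y \<sigma> \<gamma> \<eta> \<xi> = \<eta> powi ?E \<gamma> * (\<Prod>\<delta>\<in>?V. \<xi> \<delta> powi (?E \<delta> - ?E \<gamma>))"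
      using L eta nz unfolding laurent_monomial_exps_def by blast
    have h2: "h_sub N x y \<sigma>' \<gamma> \<eta> \<xi> = \<eta> powi ?E' \<gamma> * (\<Prod>\<delta>\<in>?V. \<xi> \<delta> powi (?E' \<delta> - ?E' \<gamma>))"
      using L' eta nz unfolding laurent_monomial_exps_def by blast
    have g: "?E' \<gamma> = ?E \<gamma>" using Eo \<gamma> by simp
    have za: "\<xi> \<alpha> \<noteq> 0" using nz aV by blast
    have rest: "(\<Prod>\<delta>\<in>?V - {\<alpha>} - {\<beta>}. \<xi> \<delta> powi (?E' \<delta> - ?E' \<gamma>)) = (\<Prod>\<delta>\<in>?V - {\<alpha>} - {\<beta>}. \<xi> \<delta> powi (?E \<delta> - ?E \<gamma>))"
      by (rule prod.cong) (auto simp: Eo g)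
    have ab2: "\<xi> \<alpha> powi (?E' \<alpha> - ?E' \<gamma>) * \<xi> \<beta> powi (?E' \<beta> - ?E' \<gamma>) = \<xi> \<alpha> powi (?E \<alpha> - ?E \<gamma>) * \<xi> \<beta> powi (?E \<beta> - ?E \<gamma>)"
    proof -
      have "\<xi> \<alpha> powi (?E' \<alpha> - ?E' \<gamma>) * \<xi> \<beta> powi (?E' \<beta> - ?E' \<gamma>) = \<xi> \<alpha> powi ((?E' \<alpha> - ?E' \<gamma>) + (?E' \<beta> - ?E' \<gamma>))"
        unfolding eq by (rule power_int_add[symmetric]) (use za eq in auto)
      also have "(?E' \<alpha> - ?E' \<gamma>) + (?E' \<beta> - ?E' \<gamma>) = (?E \<alpha> - ?E \<gamma>) + (?E \<beta> - ?E \<gamma>)"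
        using Esum g by simp
      also have "\<xi> \<alpha> powi ((?E \<alpha> - ?E \<gamma>) + (?E \<beta> - ?E \<gamma>)) = \<xi> \<alpha> powi (?E \<alpha> - ?E \<gamma>) * \<xi> \<beta> powi (?E \<beta> - ?E \<gamma>)"
        unfolding eq by (rule power_int_add) (use za eq in auto)
      finally show ?thesis .
    qed
    show "h_sub N x y \<sigma> \<gamma> \<eta> \<xi> = h_sub N x y \<sigma>' \<gamma> \<eta> \<xi>"
      unfolding h1 h2 split[of "\<lambda>\<delta>. \<xi> \<delta> powi (?E \<delta> - ?E \<gamma>)"] split[of "\<lambda>\<delta>. \<xi> \<delta> powi (?E' \<delta> - ?E' \<gamma>)"]
      using rest ab2 g by simp
  qed
  have part2: "(\<exists>c e. laurent_monomial_exps ({1..N} - {\<gamma>}) (h_sub N x y \<sigma> \<gamma>) c e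
                   \<and> e \<alpha> \<ge> 2 \<and> e \<beta> \<ge> 2)
          \<and> (\<exists>c e. laurent_monomial_exps ({1..N} - {\<gamma>}) (h_sub N x y \<sigma>' \<gamma>) c e
                   \<and> e \<alpha> \<ge> 2 \<and> e \<beta> \<ge> 2)"
    if hyp: "(\<exists>j. 1 \<le> j \<and> j < k \<and> \<sigma> j = \<gamma>) \<and> \<gamma> > \<alpha> \<and> \<gamma> > \<beta>"
  proof -
    obtain j where j: "1 \<le> j" "j < k" "\<sigma> j = \<gamma>" using hyp by blast
    have ga: "\<gamma> > \<alpha>" "\<gamma> > \<beta>" using hyp by auto
    have ig: "inv \<sigma> \<gamma> = j" "inv \<sigma>' \<gamma> = j" using permutes_inv_eq[OF perm] j io \<gamma> by auto
    have x1: "x j \<le> x k" "x j \<le> x (k + 1)" using mono_chain[where f=x and N=N, OF x_mono] j k by auto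
    have y1: "y \<alpha> \<le> y \<gamma>" "y \<beta> \<le> y \<gamma>" using mono_chain[where f=y and N=N, OF y_mono] aS ga \<gamma> by auto
    have "?E \<alpha> - ?E \<gamma> \<ge> 2" "?E \<beta> - ?E \<gamma> \<ge> 2" "?E' \<alpha> - ?E' \<gamma> \<ge> 2" "?E' \<beta> - ?E' \<gamma> \<ge> 2"
      using ia ia' ig x1 y1 j ga by (simp_all add: Eexp_def)
    then show ?thesis using L L' by blast
  qed
  show ?thesis using part1 part2 by blast
qed

end
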